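(* Let $\widehat{\mathbf M}\otimes\mathcal A_\psi$ be the product of a gMDP $\widehat{\mathbf M}$ (state space $\hat{\mathbb X}$, input space $\hat{\mathbb U}$) with the DFA $\mathcal A_\psi=(Q,q_0,\Sigma,F,\tau)$, and let $\delta>0$. Let $V^*_\infty:=\lim_{l\to\infty}(\mathbf T^*_\delta)^l(V_0)$ with $V_0=0$. Let $\mu^*:\hat{\mathbb X}\times Q\to\mathcal P(\hat{\mathbb U})$ be a universally measurable map with $\mu^*\in\arg\sup_\mu\mathbf T^\mu_\delta(V^*_\infty)$, i.e. $\mathbf T^{\mu^*}_\delta(V^*_\infty)=\mathbf T^*_\delta(V^*_\infty)$. Then the stationary Markov policy $(\mu^*,\mu^*,\dots)$ is an optimal $(0,\delta)$-robust policy in the sense that $$V^*_\infty=\lim_{l\to\infty}(\mathbf T^{\mu^*}_\delta)^l(V_0),\qquad V_0=0.$$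
   Context: A gMDP is a tuple $\widehat{\mathbf M}=(\hat{\mathbb X},\hat{\mathbb U},\mathbb Y,\hat x_0,\hat{\mathbf t},\hat h)$ with Polish state space $\hat{\mathbb X}$, Polish input space $\hat{\mathbb U}$, metric output space $(\mathbb Y,\mathbf d_{\mathbb Y})$, initial state $\hat x_0$, stochastic kernel $\hat{\mathbf t}(\cdot\mid\hat x,\hat u)$ on $\hat{\mathbb X}$, and measurable output map $\hat h$. $\mathsf{AP}$ is a finite set of atomic propositions, $\Sigma=2^{\mathsf{AP}}$, $\mathsf L:\mathbb Y\to\Sigma$ a measurable labelling function; $\psi$ is an scLTL formula and $\mathcal A_\psi=(Q,q_0,\Sigma,F,\tau)$ a deterministic finite automaton (finite $Q$, accepting set $F$, transition $\tau:Q\times\Sigma\to Q$) accepting exactly the words satisfying $\psi$. The product $\widehat{\mathbf M}\otimes\mathcal A_\psi$ has states $\hat{\mathbb X}\times Q$, inputs $\hat{\mathbb U}$, and kernel $\bar{\mathbf t}(d\hat x'\times\{q'\}\mid\hat x,q,u)=\mathbf 1_{\{q'\}}(\tau(q,\mathsf L(\hat h(\hat x'))))\,\hat{\mathbf t}(d\hat x'\mid\hat x,u)$. For a universally measurable $\mu:\hat{\mathbb X}\times Q\to\mathcal P(\hat{\mathbb U})$ and $V:\hat{\mathbb X}\times Q\to[0,1]$: $\mathbf T^\mu(V)(\hat x,q)=\int\max\{\mathbf 1_F(q'),V(\hat x',q')\}\,\bar{\mathbf t}(d\hat x'\times\{q'\}\mid\hat x,q,\mu(\hat x,q))$; $\mathbf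 T^\mu_\delta(V)=\mathbf L(\mathbf T^\mu(V)-\delta)$ with $\mathbf L(r)=\min(1,\max(0,r))$; and $\mathbf T^*_\delta(V)=\sup_\mu\mathbf T^\mu_\delta(V)$ (pointwise). *)

theory Defs
  imports "HOL-Probability.Probability"
begin

definition univ_meas :: "'a measure \<Rightarrow> 'b measure \<Rightarrow> ('a \<Rightarrow> 'b) \<Rightarrow> bool" where
  "univ_meas M N f \<longleftrightarrow>
     (\<forall>P. sets P = sets M \<longrightarrow> prob_space P \<longrightarrow> f \<in> completion P \<rightarrow>\<^sub>M N)"

definition XQ :: "('x::topological_space \<times> 'q) measure" where
  "XQ = (borel :: 'x measure) \<Otimes>\<^sub>M count_space UNIV"

definition policy :: "('x::topological_space \<times> 'q \<Rightarrow> 'u::topological_space measure) \<Rightarrow> bool" where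
  "policy \<mu> \<longleftrightarrow> univ_meas XQ (prob_algebra borel) \<mu>"

definition clip :: "real \<Rightarrow> real" where
  "clip r = min 1 (max 0 r)"

text \<open>Kernel t (of the gMDP), output map h,
  labelling Lab, DFA transition tau, accepting set F.  Integrals are taken w.r.t. the
  completions of the measures (integrands are universally measurable).\<close>
definition Tmu ::
  "('x \<Rightarrow> 'u \<Rightarrow> 'x measure) \<Rightarrow> ('x \<Rightarrow> 'y) \<Rightarrow> ('y \<Rightarrow> 'ap set) \<Rightarrow> ('q \<Rightarrow> 'ap set \<Rightarrow> 'q)
   \<Rightarrow> 'q set \<Rightarrow> ('x \<times> 'q \<Rightarrow> 'u measure) \<Rightarrow> ('x \<times> 'q \<Rightarrow> real) \<Rightarrow> ('x \<times> 'q \<Rightarrow> real)" where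
  "Tmu t h Lab \<tau> F \<mu> V = (\<lambda>(x, q).
     enn2real (\<integral>\<^sup>+ u. (\<integral>\<^sup>+ x'. ennreal (max (indicator F (\<tau> q (Lab (h x'))))
                                              (V (x', \<tau> q (Lab (h x')))))
                          \<partial>completion (t x u))
              \<partial>completion (\<mu> (x, q))))"

definition Tmu_delta ::
  "('x \<Rightarrow> 'u \<Rightarrow> 'x measure) \<Rightarrow> ('x \<Rightarrow> 'y) \<Rightarrow> ('y \<Rightarrow> 'ap set) \<Rightarrow> ('q \<Rightarrow> 'ap set \<Rightarrow> 'q)
   \<Rightarrow> 'q set \<Rightarrow> real \<Rightarrow> ('x \<times> 'q \<Rightarrow> 'u measure) \<Rightarrow> ('x \<times> 'q \<Rightarrow> real) \<Rightarrow> ('x \<times> 'q \<Rightarrow> real)" where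
  "Tmu_delta t h Lab \<tau> F \<delta> \<mu> V = (\<lambda>z. clip (Tmu t h Lab \<tau> F \<mu> V z - \<delta>))"

definition Tstar_delta ::
  "('x::topological_space \<Rightarrow> 'u::topological_space \<Rightarrow> 'x measure) \<Rightarrow> ('x \<Rightarrow> 'y) \<Rightarrow> ('y \<Rightarrow> 'ap set)
   \<Rightarrow> ('q \<Rightarrow> 'ap set \<Rightarrow> 'q) \<Rightarrow> 'q set \<Rightarrow> real \<Rightarrow> ('x \<times> 'q \<Rightarrow> real) \<Rightarrow> ('x \<times> 'q \<Rightarrow> real)" where
  "Tstar_delta t h Lab \<tau> F \<delta> V = (\<lambda>z. SUP \<mu>\<in>{\<mu>. policy \<mu>}. Tmu_delta t h Lab \<tau> F \<delta> \<mu> V z)"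

end

theory Submission
  imports Defs
begin


lemma nn_add_const_le:
  assumes "prob_space M" and kt: "k < top"
  shows "(\<integral>\<^sup>+x. f x + k \<partial>M) \<le> integral\<^sup>N M f + k"
  unfolding nn_integral_def[of M "\<lambda>x. f x + k"]
proof (rule SUP_least, clarify)
  fix g assume g: "simple_function M g" "g \<le> (\<lambda>x. f x + k)"
  define g' where "g' = (\<lambda>x. g x - k)"
  have sg': "simple_function M g'" unfolding g'_def using g(1) by (rule simple_function_compose1)
  have "g' \<le> f" unfolding g'_def using g(2) using kt by (auto simp: le_fun_def ennreal_minus_le_iff add.commute)
  have "integral\<^sup>S M g \<le> integral\<^sup>S M (\<lambda>x. g' x + k)"
    using g sg' by (intro simple_integral_mono) (auto simp: g'_def, metis ennreal_minus_le_iff add.commute order_refl)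
  also have "\<dots> = integral\<^sup>S M g' + integral\<^sup>S M (\<lambda>x. k)"
    using sg' by (intro simple_integral_add) auto
  also have "\<dots> = integral\<^sup>S M g' + k"
    using assms by (simp add: prob_space.emeasure_space_1)
  also have "integral\<^sup>S M g' \<le> integral\<^sup>N M f"
    unfolding nn_integral_def using sg' \<open>g' \<le> f\<close> by (intro SUP_upper) auto
  finally show "integral\<^sup>S M g \<le> integral\<^sup>N M f + k" by (simp add: add_right_mono)
qed

lemma nn_cmult_le:
  fixes r :: real
  assumes "r > 0"
  shows "(\<integral>\<^sup>+x. ennreal r * f x \<partial>M) \<le> ennreal r * integral\<^sup>N M f"
  unfolding nn_integral_def[of M "\<lambda>x. ennreal r * f x"]
proof (rule SUP_least, clarify)
  fix g assume g: "simple_function M g" "g \<le> (\<lambda>x. ennreal r * f x)"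
  define g' where "g' = (\<lambda>x. ennreal (1/r) * g x)"
  have sg': "simple_function M g'" unfolding g'_def using g(1) by (rule simple_function_compose1)
  have eq: "g x = ennreal r * g' x" for x
    using assms by (simp add: g'_def mult.assoc[symmetric] ennreal_mult[symmetric])
  have "g' \<le> f" unfolding le_fun_def
  proof
    fix x
    have "g' x \<le> ennreal (1/r) * (ennreal r * f x)" unfolding g'_def using g(2)
      by (auto simp: le_fun_def intro: mult_left_mono)
    also have "\<dots> = f x" using assms by (simp add: mult.assoc[symmetric] ennreal_mult[symmetric])
    finally show "g' x \<le> f x" .
  qed
  have "integral\<^sup>S M g = ennreal r * integral\<^sup>S M g'"
  proof -
    have "g = (\<lambda>x. ennreal r * g' x)" using eq by auto
    then show ?thesis using sg' by simp
  qed
  also have "integral\<^sup>S M g' \<le> integral\<^sup>N M f"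
    unfolding nn_integral_def using sg' \<open>g' \<le> f\<close> by (intro SUP_upper) auto
  finally show "integral\<^sup>S M g \<le> ennreal r * integral\<^sup>N M f" by (simp add: mult_left_mono)
qed

definition Iop :: "('x \<Rightarrow> 'u \<Rightarrow> 'x measure) \<Rightarrow> 'u measure \<Rightarrow> 'x \<Rightarrow> ('x \<Rightarrow> real) \<Rightarrow> real" where
  "Iop t M x f = enn2real (\<integral>\<^sup>+u. (\<integral>\<^sup>+x'. ennreal (f x') \<partial>completion (t x u)) \<partial>completion M)"

lemma nn_le_1:
  assumes "prob_space M" "\<And>x. f x \<le> 1"
  shows "integral\<^sup>N M f \<le> 1"
proof -
  have "integral\<^sup>N M f \<le> (\<integral>\<^sup>+x. 1 \<partial>M)" using assms(2) by (intro nn_integral_mono) auto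
  also have "\<dots> = 1" using assms(1) by (simp add: prob_space.emeasure_space_1)
  finally show ?thesis .
qed

lemma inner_le_1:
  assumes PT: "\<And>u. prob_space (t x u)" "\<And>x'. f x' \<le> 1"
  shows "(\<integral>\<^sup>+x'. ennreal (f x') \<partial>completion (t x u)) \<le> 1"
  using assms by (intro nn_le_1 prob_space.prob_space_completion) auto

lemma outer_le_1:
  assumes PT: "\<And>u. prob_space (t x u)" and PM: "prob_space M" and "\<And>x'. f x' \<le> 1"
  shows "(\<integral>\<^sup>+u. (\<integral>\<^sup>+x'. ennreal (f x') \<partial>completion (t x u)) \<partial>completion M) \<le> 1"
  using assms by (intro nn_le_1 inner_le_1 prob_space.prob_space_completion) auto

lemma Iop_nonneg: "0 \<le> Iop t M x f" by (simp add: Iop_def)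

lemma Iop_le_1:
  assumes PT: "\<And>u. prob_space (t x u)" and PM: "prob_space M" and "\<And>x'. f x' \<le> 1"
  shows "Iop t M x f \<le> 1"
  unfolding Iop_def using outer_le_1[of t x M f, OF assms]
  by (intro enn2real_leI) auto

lemma Iop_mono:
  assumes PT: "\<And>u. prob_space (t x u)" and PM: "prob_space M"
    and le: "\<And>x'. f x' \<le> g x'" and g1: "\<And>x'. g x' \<le> 1"
  shows "Iop t M x f \<le> Iop t M x g"
  unfolding Iop_def
proof (rule enn2real_mono)
  show "(\<integral>\<^sup>+u. (\<integral>\<^sup>+x'. ennreal (f x') \<partial>completion (t x u)) \<partial>completion M)
     \<le> (\<integral>\<^sup>+u. (\<integral>\<^sup>+x'. ennreal (g x') \<partial>completion (t x u)) \<partial>completion M)"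
    using le by (intro nn_integral_mono) (auto simp: ennreal_leI)
  show "(\<integral>\<^sup>+u. (\<integral>\<^sup>+x'. ennreal (g x') \<partial>completion (t x u)) \<partial>completion M) < top"
    using outer_le_1[of t x M g, OF PT PM g1] by (simp add: le_less_trans)
qed

lemma Iop_affine:
  assumes PT: "\<And>u. prob_space (t x u)" and PM: "prob_space M"
    and f0: "\<And>x'. 0 \<le> f x'" and f1: "\<And>x'. f x' \<le> 1" and a: "0 < a" and k: "0 \<le> k"
  shows "Iop t M x (\<lambda>x'. a * f x' + k) \<le> a * Iop t M x f + k"
proof -
  have inner: "(\<integral>\<^sup>+x'. ennreal (a * f x' + k) \<partial>completion (t x u))
     \<le> ennreal a * (\<integral>\<^sup>+x'. ennreal (f x') \<partial>completion (t x u)) + ennreal k" for u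
  proof -
    have "(\<integral>\<^sup>+x'. ennreal (a * f x' + k) \<partial>completion (t x u))
       = (\<integral>\<^sup>+x'. ennreal a * ennreal (f x') + ennreal k \<partial>completion (t x u))"
      using f0 a k by (intro nn_integral_cong) (simp add: ennreal_plus ennreal_mult)
    also have "\<dots> \<le> (\<integral>\<^sup>+x'. ennreal a * ennreal (f x') \<partial>completion (t x u)) + ennreal k"
      using PT by (intro nn_add_const_le prob_space.prob_space_completion) auto
    also have "\<dots> \<le> ennreal a * (\<integral>\<^sup>+x'. ennreal (f x') \<partial>completion (t x u)) + ennreal k"
      using a by (intro add_right_mono nn_cmult_le)
    finally show ?thesis .
  qed
  let ?O = "(\<integral>\<^sup>+u. (\<integral>\<^sup>+x'. ennreal (f x') \<partial>completion (t x u)) \<partial>completion M)"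
  have "(\<integral>\<^sup>+u. (\<integral>\<^sup>+x'. ennreal (a * f x' + k) \<partial>completion (t x u)) \<partial>completion M)
     \<le> (\<integral>\<^sup>+u. ennreal a * (\<integral>\<^sup>+x'. ennreal (f x') \<partial>completion (t x u)) + ennreal k \<partial>completion M)"
    using inner by (intro nn_integral_mono) auto
  also have "\<dots> \<le> (\<integral>\<^sup>+u. ennreal a * (\<integral>\<^sup>+x'. ennreal (f x') \<partial>completion (t x u)) \<partial>completion M) + ennreal k"
    using PM by (intro nn_add_const_le prob_space.prob_space_completion) auto
  also have "\<dots> \<le> ennreal a * ?O + ennreal k"
    using a by (intro add_right_mono nn_cmult_le)
  finally have le: "(\<integral>\<^sup>+u. (\<integral>\<^sup>+x'. ennreal (a * f x' + k) \<partial>completion (t x u)) \<partial>completion M)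
     \<le> ennreal a * ?O + ennreal k" .
  have O1: "?O \<le> 1" using outer_le_1[of t x M f, OF PT PM f1] .
  then have Ofin: "?O < top" by (simp add: le_less_trans)
  have fin: "ennreal a * ?O + ennreal k < top"
    using Ofin by (simp add: ennreal_mult_less_top)
  have "Iop t M x (\<lambda>x'. a * f x' + k) \<le> enn2real (ennreal a * ?O + ennreal k)"
    unfolding Iop_def using le fin by (rule enn2real_mono)
  also have "\<dots> = a * enn2real ?O + k"
    using Ofin a k by (simp add: enn2real_plus enn2real_mult ennreal_mult_less_top)
  finally show ?thesis by (simp add: Iop_def)
qed



lemma policy_prob:
  assumes "policy \<mu>"
  shows "prob_space (\<mu> z)"
proof -
  obtain x q where z: "z = (x, q)" by (cases z)
  have sp: "space XQ = UNIV" by (simp add: XQ_def space_pair_measure)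
  have P: "prob_space (return XQ z)" using sp by (intro prob_space_return) auto
  have "\<mu> \<in> completion (return XQ z) \<rightarrow>\<^sub>M prob_algebra borel"
    using assms P unfolding policy_def univ_meas_def by auto
  then have "\<mu> z \<in> space (prob_algebra borel)"
    by (rule measurable_space) (simp add: sp)
  then show ?thesis by (simp add: space_prob_algebra)
qed

lemma kernel_prob:
  assumes "(\<lambda>(x, u). t x u) \<in> borel \<rightarrow>\<^sub>M prob_algebra borel"
  shows "prob_space (t x u)"
proof -
  have "(\<lambda>(x, u). t x u) (x, u) \<in> space (prob_algebra borel)"
    using assms by (rule measurable_space) simp
  then show ?thesis by (simp add: space_prob_algebra)
qed

lemma clip_bounds: "0 \<le> clip r" "clip r \<le> 1" by (auto simp: clip_def)
lemma clip_mono: "r \<le> s \<Longrightarrow> clip r \<le> clip s" by (auto simp: clip_def)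

lemma Tmu_Iop:
  "Tmu t h Lab \<tau> F \<mu> V (x, q) =
   Iop t (\<mu> (x, q)) x (\<lambda>x'. max (indicator F (\<tau> q (Lab (h x')))) (V (x', \<tau> q (Lab (h x')))))"
  by (simp add: Tmu_def Iop_def)

lemma Tmu_le_1:
  assumes PT: "\<And>x u. prob_space (t x u)" and PM: "\<And>z. prob_space (\<mu> z)"
    and V1: "\<And>z. V z \<le> 1"
  shows "Tmu t h Lab \<tau> F \<mu> V z \<le> 1"
proof -
  obtain x q where z: "z = (x, q)" by (cases z)
  have "max (indicator F i) (V y) \<le> 1" for i y using V1[of y] by (simp add: indicator_def)
  then show ?thesis unfolding z Tmu_Iop
    by (intro Iop_le_1 PT PM)
qed

lemma Tmu_mono:
  assumes PT: "\<And>x u. prob_space (t x u)" and PM: "\<And>z. prob_space (\<mu> z)"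
    and le: "\<And>z. V z \<le> V' z" and V1: "\<And>z. V' z \<le> 1"
  shows "Tmu t h Lab \<tau> F \<mu> V z \<le> Tmu t h Lab \<tau> F \<mu> V' z"
proof -
  obtain x q where z: "z = (x, q)" by (cases z)
  have a: "max (indicator F i) (V' y) \<le> 1" for i y using V1[of y] by (simp add: indicator_def)
  have b: "max (indicator F i) (V y) \<le> max (indicator F i) (V' y)" for i y using le[of y] by simp
  show ?thesis unfolding z Tmu_Iop
    by (intro Iop_mono PT PM a b)
qed

lemma Tmu_delta_bounds:
  "0 \<le> Tmu_delta t h Lab \<tau> F \<delta> \<mu> V z" "Tmu_delta t h Lab \<tau> F \<delta> \<mu> V z \<le> 1"
  by (auto simp: Tmu_delta_def clip_bounds)

lemma Tmu_delta_mono: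
  assumes PT: "\<And>x u. prob_space (t x u)" and PM: "\<And>z. prob_space (\<mu> z)"
    and le: "\<And>z. V z \<le> V' z" and V1: "\<And>z. V' z \<le> 1"
  shows "Tmu_delta t h Lab \<tau> F \<delta> \<mu> V z \<le> Tmu_delta t h Lab \<tau> F \<delta> \<mu> V' z"
  unfolding Tmu_delta_def
  by (intro clip_mono diff_right_mono Tmu_mono[OF PT PM le V1])

lemma Tstar_facts:
  fixes t :: "'x::topological_space \<Rightarrow> 'u::topological_space \<Rightarrow> 'x measure"
    and \<mu>0 :: "'x \<times> 'q \<Rightarrow> 'u measure"
  assumes PT: "\<And>x u. prob_space (t x u)" and pol: "policy \<mu>0"
  shows Tstar_upper: "\<And>\<mu> (V::'x \<times> 'q \<Rightarrow> real) z. policy \<mu> \<Longrightarrow> Tmu_delta t h Lab \<tau> F \<delta> \<mu> V z \<le> Tstar_delta t h Lab \<tau> F \<delta> V z"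
    and Tstar_bounds: "\<And>(V::'x \<times> 'q \<Rightarrow> real) z. 0 \<le> Tstar_delta t h Lab \<tau> F \<delta> V z \<and> Tstar_delta t h Lab \<tau> F \<delta> V z \<le> 1"
    and Tstar_mono: "\<And>(V::'x \<times> 'q \<Rightarrow> real) V' z. (\<And>z. V z \<le> V' z) \<Longrightarrow> (\<And>z. V' z \<le> 1) \<Longrightarrow>
           Tstar_delta t h Lab \<tau> F \<delta> V z \<le> Tstar_delta t h Lab \<tau> F \<delta> V' z"
proof -
  have bdd: "bdd_above ((\<lambda>\<mu>. Tmu_delta t h Lab \<tau> F \<delta> \<mu> V z) ` {\<mu>. policy \<mu>})" for V z
    by (rule bdd_aboveI[where M=1]) (auto simp: Tmu_delta_bounds)
  show up: "Tmu_delta t h Lab \<tau> F \<delta> \<mu> V z \<le> Tstar_delta t h Lab \<tau> F \<delta> V z" if "policy \<mu>" for \<mu> V z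
    unfolding Tstar_delta_def using that bdd by (intro cSUP_upper) auto
  show "0 \<le> Tstar_delta t h Lab \<tau> F \<delta> V z \<and> Tstar_delta t h Lab \<tau> F \<delta> V z \<le> 1" for V z
  proof
    show "0 \<le> Tstar_delta t h Lab \<tau> F \<delta> V z"
      using up[OF pol, of V z] Tmu_delta_bounds(1)[of t h Lab \<tau> F \<delta> \<mu>0 V z] by linarith
    show "Tstar_delta t h Lab \<tau> F \<delta> V z \<le> 1"
      unfolding Tstar_delta_def using pol by (intro cSUP_least) (auto simp: Tmu_delta_bounds)
  qed
  show "Tstar_delta t h Lab \<tau> F \<delta> V z \<le> Tstar_delta t h Lab \<tau> F \<delta> V' z"
    if le: "\<And>z. V z \<le> V' z" and V1: "\<And>z. V' z \<le> 1" for V V' z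
    unfolding Tstar_delta_def[of t h Lab \<tau> F \<delta> V]
  proof (intro cSUP_least)
    fix \<mu> :: "'x \<times> 'q \<Rightarrow> 'u measure" assume "\<mu> \<in> {\<mu>. policy \<mu>}"
    then have p: "policy \<mu>" by simp
    have "Tmu_delta t h Lab \<tau> F \<delta> \<mu> V z \<le> Tmu_delta t h Lab \<tau> F \<delta> \<mu> V' z"
      using le V1 by (intro Tmu_delta_mono PT policy_prob[OF p])
    also have "\<dots> \<le> Tstar_delta t h Lab \<tau> F \<delta> V' z" using up[OF p] .
    finally show "Tmu_delta t h Lab \<tau> F \<delta> \<mu> V z \<le> Tstar_delta t h Lab \<tau> F \<delta> V' z" .
  qed (use pol in auto)
qed

definition psi :: "real \<Rightarrow> real \<Rightarrow> real" where
  "psi c v = max 0 ((v - c) / (1 - c))"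

lemma psi_nonneg: "0 \<le> psi c v" by (simp add: psi_def)

lemma psi_le_1: "c \<le> 1 \<Longrightarrow> v \<le> 1 \<Longrightarrow> psi c v \<le> 1"
  by (cases "c = 1") (auto simp: psi_def divide_le_eq)

lemma psi_mono: "c \<le> 1 \<Longrightarrow> v \<le> w \<Longrightarrow> psi c v \<le> psi c w"
proof -
  assume "c \<le> 1" "v \<le> w"
  then have "(v - c) / (1 - c) \<le> (w - c) / (1 - c)"
    by (intro divide_right_mono) auto
  then show ?thesis by (simp add: psi_def)
qed

lemma psi_ge: "0 \<le> c \<Longrightarrow> c \<le> 1 \<Longrightarrow> v \<le> 1 \<Longrightarrow> v - c \<le> psi c v"
proof (cases "c = 1")
  case False
  assume "0 \<le> c" "c \<le> 1" "v \<le> 1"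
  then have c1: "c < 1" using False by simp
  show ?thesis
  proof (cases "v \<ge> c")
    case True
    have "v - c \<le> (v - c) / (1 - c)" using c1 True \<open>0 \<le> c\<close>
      by (simp add: le_divide_eq mult_left_le)
    then show ?thesis by (simp add: psi_def)
  qed (simp add: psi_def)
qed (simp add: psi_def)

lemma psi_1: "psi 1 v = 0" by (simp add: psi_def)

lemma psi_0: "0 \<le> c \<Longrightarrow> c \<le> 1 \<Longrightarrow> psi c 0 = 0"
  by (cases "c = 1") (auto simp: psi_def divide_nonpos_pos)

lemma psi_max: "0 \<le> c \<Longrightarrow> c \<le> 1 \<Longrightarrow> v \<le> 1 \<Longrightarrow> (i::real) \<in> {0, 1} \<Longrightarrow> psi c (max i v) \<le> max i (psi c v)"
proof -
  assume c: "0 \<le> c" "c \<le> 1" and v: "v \<le> 1" and i: "i \<in> {0, 1}"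
  show ?thesis
  proof (cases "i = 0")
    case True
    show ?thesis
    proof (cases "v \<ge> 0")
      case True then show ?thesis using \<open>i = 0\<close> by (simp add: psi_nonneg)
    next
      case False then show ?thesis using \<open>i = 0\<close> c by (simp add: psi_0 psi_nonneg)
    qed
  next
    case False
    then have "i = 1" using i by simp
    then show ?thesis using v c psi_le_1[of c 1] by simp
  qed
qed

lemma Iop_psi:
  assumes PT: "\<And>u. prob_space (t x u)" and PM: "prob_space M"
    and Y0: "\<And>x'. 0 \<le> Y x'" and Y1: "\<And>x'. Y x' \<le> 1" and c: "0 \<le> c" "c \<le> 1"
  shows "psi c (Iop t M x Y) \<le> Iop t M x (\<lambda>x'. psi c (Y x'))"
proof (cases "c = 1")
  case True then show ?thesis by (simp add: psi_1 Iop_nonneg)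
next
  case False
  then have c1: "c < 1" using c by simp
  have pt: "Y x' \<le> (1 - c) * psi c (Y x') + c" for x'
  proof (cases "Y x' \<ge> c")
    case True then show ?thesis using c1 by (simp add: psi_def)
  next
    case False
    have "0 \<le> (1 - c) * psi c (Y x')" using c1 psi_nonneg[of c "Y x'"] by simp
    then show ?thesis using False by simp
  qed
  have "Iop t M x Y \<le> Iop t M x (\<lambda>x'. (1 - c) * psi c (Y x') + c)"
  proof (rule Iop_mono[of t x M Y "\<lambda>x'. (1 - c) * psi c (Y x') + c", OF PT PM pt])
    fix x'
    have "(1 - c) * psi c (Y x') \<le> (1 - c) * 1"
      using c1 by (intro mult_left_mono psi_le_1 Y1) auto
    then show "(1 - c) * psi c (Y x') + c \<le> 1" by simp
  qed
  also have "\<dots> \<le> (1 - c) * Iop t M x (\<lambda>x'. psi c (Y x')) + c"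
    using c1 c by (intro Iop_affine PT PM psi_nonneg psi_le_1 Y1) auto
  finally have "(Iop t M x Y - c) / (1 - c) \<le> Iop t M x (\<lambda>x'. psi c (Y x'))"
    using c1 by (simp add: divide_le_eq mult.commute)
  then show ?thesis by (simp add: psi_def Iop_nonneg)
qed

lemma arith_step:
  fixes c \<delta> s v p w :: real
  assumes c: "0 \<le> c" "c \<le> 1" and d: "0 < \<delta>" and s1: "s \<le> 1" and v0: "0 \<le> v"
    and v: "v \<le> clip (s - \<delta>)" and p: "psi c s \<le> p" and p1: "p \<le> 1" and w: "clip (p - \<delta>) \<le> w"
  shows "psi (c * (1 - min \<delta> 1)) v \<le> w"
proof -
  have w0: "0 \<le> w" using w clip_bounds(1)[of "p - \<delta>"] by linarith
  show ?thesis
  proof (cases "\<delta> \<ge> 1")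
    case True
    then have "clip (s - \<delta>) = 0" using s1 by (simp add: clip_def)
    then have "v = 0" using v v0 by simp
    then show ?thesis using True w0 by (simp add: psi_def)
  next
    case False
    then have md: "min \<delta> 1 = \<delta>" by simp
    define c' where "c' = c * (1 - \<delta>)"
    have c'0: "0 \<le> c'" "c' \<le> 1 - \<delta>" using c False d by (auto simp: c'_def mult_left_le)
    show ?thesis
    proof (cases "v = 0")
      case True then show ?thesis using c'0 d w0 by (simp add: md c'_def[symmetric] psi_0)
    next
      case False
      then have vpos: "0 < v" using v0 by simp
      then have vs: "v \<le> s - \<delta>" using v by (auto simp: clip_def)
      show ?thesis
      proof (cases "c = 1")
        case True
        then have "psi c' v = 0" using vs s1 d by (simp add: psi_def c'_def divide_nonpos_pos)
        then show ?thesis using w0 by (simp add: md c'_def)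
      next
        case False
        then have c1: "c < 1" using c by simp
        have "(s - c) / (1 - c) \<le> p" using p by (simp add: psi_def)
        moreover have "(v + \<delta> - c) / (1 - c) \<le> (s - c) / (1 - c)"
          using vs c1 by (intro divide_right_mono) auto
        ultimately have "(v + \<delta> - c) / (1 - c) - \<delta> \<le> w"
          using w p1 d by (auto simp: clip_def)
        moreover have "(v + \<delta> - c) / (1 - c) - \<delta> = (v - c') / (1 - c)"
          using c1 by (simp add: field_simps c'_def)
        ultimately have wl: "(v - c') / (1 - c) \<le> w" by simp
        show ?thesis
        proof (cases "v \<le> c'")
          case True
          then have "psi c' v = 0" using c'0 d by (simp add: psi_def divide_nonpos_pos)
          then show ?thesis using w0 by (simp add: md c'_def)
        next
          case False
          have "1 - c \<le> 1 - c'" using c d c'0 by (simp add: c'_def algebra_simps mult_left_le)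
          then have "(v - c') / (1 - c') \<le> (v - c') / (1 - c)"
            using False c1 by (intro divide_left_mono) auto
          then have "psi c' v \<le> w" using wl w0 by (simp add: psi_def)
          then show ?thesis by (simp add: md c'_def)
        qed
      qed
    qed
  qed
qed



theorem theorem1:
  fixes t :: "'x::polish_space \<Rightarrow> 'u::polish_space \<Rightarrow> 'x measure"
    and h :: "'x \<Rightarrow> 'y::metric_space"
    and Lab :: "'y \<Rightarrow> 'ap::finite set"
    and \<tau> :: "'q::finite \<Rightarrow> 'ap set \<Rightarrow> 'q"
    and F :: "'q set"
    and \<delta> :: real
    and \<mu>s :: "'x \<times> 'q \<Rightarrow> 'u measure"
  assumes kernel: "(\<lambda>(x, u). t x u) \<in> borel \<rightarrow>\<^sub>M prob_algebra borel"
    and h_meas: "h \<in> borel_measurable borel"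
    and Lab_meas: "Lab \<in> borel \<rightarrow>\<^sub>M count_space UNIV"
    and delta_pos: "\<delta> > 0"
    and mus_policy: "policy \<mu>s"
    and mus_opt: "Tmu_delta t h Lab \<tau> F \<delta> \<mu>s
                    (\<lambda>z. lim (\<lambda>l. (Tstar_delta t h Lab \<tau> F \<delta> ^^ l) (\<lambda>_. 0) z))
                  = Tstar_delta t h Lab \<tau> F \<delta>
                    (\<lambda>z. lim (\<lambda>l. (Tstar_delta t h Lab \<tau> F \<delta> ^^ l) (\<lambda>_. 0) z))"
  shows "\<forall>z. (\<lambda>l. (Tmu_delta t h Lab \<tau> F \<delta> \<mu>s ^^ l) (\<lambda>_. 0) z)
              \<longlonglongrightarrow> lim (\<lambda>l. (Tstar_delta t h Lab \<tau> F \<delta> ^^ l) (\<lambda>_. 0) z)"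
proof -
  have PT: "\<And>x u. prob_space (t x u)" using kernel_prob[OF kernel] .
  have PM: "\<And>z. prob_space (\<mu>s z)" using policy_prob[OF mus_policy] .
  note TS = Tstar_facts[where t=t and h=h and Lab=Lab and \<tau>=\<tau> and F=F and \<delta>=\<delta>, OF PT mus_policy]
  define S where "S = Tstar_delta t h Lab \<tau> F \<delta>"
  define G where "G = Tmu_delta t h Lab \<tau> F \<delta> \<mu>s"
  define Vl where "Vl l = (S ^^ l) (\<lambda>_. 0)" for l
  define Vs where "Vs = (\<lambda>z. lim (\<lambda>l. Vl l z))"
  define Wl where "Wl l = (G ^^ l) (\<lambda>_. 0)" for l
  have S_up: "G V z \<le> S V z" for V z unfolding G_def S_def using TS(1)[OF mus_policy] .
  have S_b: "0 \<le> S V z" "S V z \<le> 1" for V z unfolding S_def using TS(2) by auto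
  have S_mono: "S V z \<le> S V' z" if "\<And>z. V z \<le> V' z" "\<And>z. V' z \<le> 1" for V V' z
    unfolding S_def using TS(3) that by blast
  have G_mono: "G V z \<le> G V' z" if "\<And>z. V z \<le> V' z" "\<And>z. V' z \<le> 1" for V V' z
    unfolding G_def using that by (intro Tmu_delta_mono PT PM)
  have G_b: "0 \<le> G V z" "G V z \<le> 1" for V z unfolding G_def by (auto simp: Tmu_delta_bounds)
  have Vl_Suc: "Vl (Suc l) = S (Vl l)" for l by (simp add: Vl_def)
  have Wl_Suc: "Wl (Suc l) = G (Wl l)" for l by (simp add: Wl_def)
  have Vl_b: "0 \<le> Vl l z \<and> Vl l z \<le> 1" for l z
    by (cases l) (auto simp: Vl_def[of 0] Vl_Suc S_b)
  have Wl_b: "0 \<le> Wl l z \<and> Wl l z \<le> 1" for l z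
    by (cases l) (auto simp: Wl_def[of 0] Wl_Suc G_b)
  have Vl_1: "Vl l z \<le> 1" and Vl_0: "0 \<le> Vl l z" for l z using Vl_b by auto
  have Wl_1: "Wl l z \<le> 1" and Wl_0: "0 \<le> Wl l z" for l z using Wl_b by auto
  have Vl_inc: "Vl l z \<le> Vl (Suc l) z" for l z
  proof (induction l arbitrary: z)
    case 0 then show ?case using Vl_b[of 1 z] by (simp add: Vl_def)
  next
    case (Suc l)
    show ?case unfolding Vl_Suc[of "Suc l"] Vl_Suc[of l]
      using Suc by (intro S_mono) (auto simp: Vl_Suc S_b)
  qed
  have lim: "(\<lambda>l. Vl l z) \<longlonglongrightarrow> (SUP l. Vl l z)" for z
  proof (rule LIMSEQ_incseq_SUP)
    show "bdd_above (range (\<lambda>l. Vl l z))" by (intro bdd_aboveI[where M=1]) (auto simp: Vl_1)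
    show "incseq (\<lambda>l. Vl l z)" using Vl_inc by (intro incseq_SucI) auto
  qed
  have bdd: "bdd_above (range (\<lambda>l. Vl l z))" for z by (intro bdd_aboveI[where M=1]) (auto simp: Vl_1)
  have Vs_eq: "Vs z = (SUP l. Vl l z)" for z unfolding Vs_def using lim by (rule limI)
  have Vl_le: "Vl l z \<le> Vs z" for l z unfolding Vs_eq using bdd by (intro cSUP_upper) auto
  have Vs_b: "0 \<le> Vs z" "Vs z \<le> 1" for z
    using Vl_le[of 0 z] Vl_b[of 0 z] apply simp
    unfolding Vs_eq using Vl_b by (intro cSUP_least) auto
  have Vs_sub: "Vs z \<le> S Vs z" for z
    unfolding Vs_eq[of z]
  proof (rule cSUP_least)
    fix l
    have "Vl l z \<le> Vl (Suc l) z" by (rule Vl_inc)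
    also have "\<dots> = S (Vl l) z" by (simp add: Vl_Suc)
    also have "\<dots> \<le> S Vs z" using Vl_le Vs_b by (intro S_mono) auto
    finally show "Vl l z \<le> S Vs z" .
  qed auto
  have GS: "G Vs = S Vs" using mus_opt by (simp add: G_def S_def Vs_def Vl_def)
  have Vs_G: "Vs z \<le> G Vs z" for z using Vs_sub GS by simp
  have Wl_le: "Wl l z \<le> Vl l z" for l z
  proof (induction l arbitrary: z)
    case 0 then show ?case by (simp add: Wl_def Vl_def)
  next
    case (Suc l)
    have "Wl (Suc l) z = G (Wl l) z" by (simp add: Wl_Suc)
    also have "\<dots> \<le> G (Vl l) z" using Suc Vl_b by (intro G_mono) auto
    also have "\<dots> \<le> S (Vl l) z" by (rule S_up)
    finally show ?case by (simp add: Vl_Suc)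
  qed
  have Wl_Vs: "Wl l z \<le> Vs z" for l z using Wl_le Vl_le order_trans by blast
  define c where "c n = (1 - min \<delta> 1) ^ n" for n
  have c_b: "0 \<le> c n" "c n \<le> 1" for n unfolding c_def using delta_pos
    by (auto intro!: power_le_one)
  have c_Suc: "c (Suc n) = c n * (1 - min \<delta> 1)" for n by (simp add: c_def mult.commute)
  have key: "psi (c n) (Vs z) \<le> Wl n z" for n z
  proof (induction n arbitrary: z)
    case 0 then show ?case by (simp add: c_def psi_1 Wl_def)
  next
    case (Suc n)
    obtain x q where z: "z = (x, q)" by (cases z)
    define Y where "Y = (\<lambda>x'. max (indicator F (\<tau> q (Lab (h x')))) (Vs (x', \<tau> q (Lab (h x')))))"
    define YW where "YW = (\<lambda>x'. max (indicator F (\<tau> q (Lab (h x')))) (Wl n (x', \<tau> q (Lab (h x')))))"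
    define s where "s = Iop t (\<mu>s (x, q)) x Y"
    define p where "p = Iop t (\<mu>s (x, q)) x YW"
    have ind: "indicator F i \<in> {0::real, 1}" for i by (simp add: indicator_def)
    have Y0: "0 \<le> Y x'" for x' unfolding Y_def by (rule max.coboundedI2[OF Vs_b(1)])
    have Y1: "Y x' \<le> 1" for x' using Vs_b(2) by (simp add: Y_def indicator_def)
    have YW1: "YW x' \<le> 1" for x' using Wl_1 by (simp add: YW_def indicator_def)
    have Gs: "G Vs z = clip (s - \<delta>)"
      by (simp add: G_def Tmu_delta_def z Tmu_Iop s_def Y_def)
    have Gp: "Wl (Suc n) z = clip (p - \<delta>)"
      by (simp add: Wl_Suc G_def Tmu_delta_def z Tmu_Iop p_def YW_def)
    have s1: "s \<le> 1" unfolding s_def using Y1 by (intro Iop_le_1 PT PM)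
    have p1: "p \<le> 1" unfolding p_def using YW1 by (intro Iop_le_1 PT PM)
    have "psi (c n) s \<le> Iop t (\<mu>s (x, q)) x (\<lambda>x'. psi (c n) (Y x'))"
      unfolding s_def using Y0 Y1 c_b by (intro Iop_psi PT PM)
    also have "\<dots> \<le> p" unfolding p_def
    proof (rule Iop_mono[of t x "\<mu>s (x, q)" "\<lambda>x'. psi (c n) (Y x')" YW, OF PT PM _ YW1])
      fix x'
      let ?i = "indicator F (\<tau> q (Lab (h x'))) :: real"
      have "psi (c n) (Y x') \<le> max ?i (psi (c n) (Vs (x', \<tau> q (Lab (h x')))))"
        unfolding Y_def using c_b Vs_b ind by (intro psi_max) auto
      also have "\<dots> \<le> YW x'" unfolding YW_def using Suc.IH by (intro max.mono) auto
      finally show "psi (c n) (Y x') \<le> YW x'" .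
    qed
    finally have ps: "psi (c n) s \<le> p" .
    have "psi (c n * (1 - min \<delta> 1)) (Vs z) \<le> Wl (Suc n) z"
      using arith_step[OF c_b delta_pos s1 Vs_b(1)[of z] _ ps p1] Vs_G[of z] Gs Gp by simp
    then show ?case by (simp add: c_Suc)
  qed
  have fin: "(\<lambda>l. Wl l z) \<longlonglongrightarrow> Vs z" for z
  proof (rule tendsto_sandwich)
    show "\<forall>\<^sub>F n in sequentially. Vs z - c n \<le> Wl n z"
      using psi_ge[OF c_b Vs_b(2)] key order_trans by (intro always_eventually) blast
    show "\<forall>\<^sub>F n in sequentially. Wl n z \<le> Vs z" using Wl_Vs by simp
    have c0: "c \<longlonglongrightarrow> 0" unfolding c_def using delta_pos by (intro LIMSEQ_power_zero) auto
    then show "(\<lambda>n. Vs z - c n) \<longlonglongrightarrow> Vs z" using tendsto_diff[OF tendsto_const[of "Vs z"] c0] by simp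
  qed simp
  then show ?thesis by (simp add: Wl_def Vs_def Vl_def G_def S_def)
qed

end
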